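(* Let $f$ and $f^\bullet$ be scaling functions with $f\ll f^\bullet$. Suppose there exists a sequence of permutations $(\sigma_j)_{j\in\mathbb{N}}$ with $|\sigma_j|\to\infty$ that converges at scale $f$ to a limit $\Xi\in[0,1]^{S}$. Then there exists a sequence of permutations that converges at scale $f^\bullet$ to $\Xi$.
   Context: For functions $g,h:\mathbb{N}\to\mathbb{R}^+$, write $g\ll h$ if $g(n)/h(n)\to0$ as $n\to\infty$. A scaling function is a function $f:\mathbb{N}\to\mathbb{R}^+$ with $f(n)\le n$ for all $n$, $f(n)\to\infty$ and $f(n)/n\to 0$. Let $S_n$ be the set of permutations of $[n]=\{1,\dots,n\}$ and $S=\bigcup_n S_n$. An occurrence of a pattern $\pi\in S_k$ in $\sigma\in S_n$ is a $k$-element set of indices $i_1<\dots<i_k$ such that $\sigma(i_1)\dots\sigma(i_k)$ is order-isomorphic to $\pi$; its width is $i_k-i_1+1$. For real $f\in[k,n]$, $\rho_f(\pi,\sigma)$ is the number of occurrences of $\pi$ in $\sigma$ of width at most $f$ divided by the number of $k$-element subsets of $[n]$ of width at most $f$. A sequence $(\sigma_j)$ with $|\sigma_j|\to\infty$ converges at scale $f$ to $\Xi\in[0,1]^S$ if $\rho_{f(|\sigma_j|)}(\pi,\sigma_j)\to\Xi_\pi$ for every $\pi\in S$. *)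

theory Defs
  imports Complex_Main
begin

text \<open>A permutation of [n] (n \<ge> 1) is represented as the list of its values
  sigma(1), ..., sigma(n); list positions are 0-based, which does not affect widths.\<close>
definition is_perm :: "nat list \<Rightarrow> bool" where
  "is_perm \<sigma> \<longleftrightarrow> \<sigma> \<noteq> [] \<and> distinct \<sigma> \<and> set \<sigma> = {1..length \<sigma>}"

definition scaling_function :: "(nat \<Rightarrow> real) \<Rightarrow> bool" where
  "scaling_function f \<longleftrightarrow>
     (\<forall>n\<ge>1. 0 < f n \<and> f n \<le> real n) \<and>
     filterlim f at_top sequentially \<and>
     ((\<lambda>n. f n / real n) \<longlonglongrightarrow> 0)"

definition much_less :: "(nat \<Rightarrow> real) \<Rightarrow> (nat \<Rightarrow> real) \<Rightarrow> bool" where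
  "much_less g h \<longleftrightarrow> ((\<lambda>n. g n / h n) \<longlonglongrightarrow> 0)"

definition occurrence :: "nat list \<Rightarrow> nat list \<Rightarrow> nat set \<Rightarrow> bool" where
  "occurrence \<pi> \<sigma> I \<longleftrightarrow> I \<subseteq> {0..<length \<sigma>} \<and> card I = length \<pi> \<and>
     (\<forall>a<length \<pi>. \<forall>b<length \<pi>.
        \<pi> ! a < \<pi> ! b \<longleftrightarrow>
        \<sigma> ! (sorted_list_of_set I ! a) < \<sigma> ! (sorted_list_of_set I ! b))"

definition width :: "nat set \<Rightarrow> nat" where
  "width I = Max I - Min I + 1"

definition rho :: "real \<Rightarrow> nat list \<Rightarrow> nat list \<Rightarrow> real" where
  "rho f \<pi> \<sigma> =
     real (card {I. occurrence \<pi> \<sigma> I \<and> real (width I) \<le> f}) /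
     real (card {I. I \<subseteq> {0..<length \<sigma>} \<and> card I = length \<pi> \<and> real (width I) \<le> f})"

definition converges_at_scale ::
    "(nat \<Rightarrow> real) \<Rightarrow> (nat \<Rightarrow> nat list) \<Rightarrow> (nat list \<Rightarrow> real) \<Rightarrow> bool" where
  "converges_at_scale f \<sigma>s \<Xi> \<longleftrightarrow>
     filterlim (\<lambda>j. length (\<sigma>s j)) at_top sequentially \<and>
     (\<forall>\<pi>. is_perm \<pi> \<longrightarrow>
        ((\<lambda>j. rho (f (length (\<sigma>s j))) \<pi> (\<sigma>s j)) \<longlonglongrightarrow> \<Xi> \<pi>))"

end

theory Submission
  imports Defs "HOL-Library.FuncSet"
begin

lemma binom_upper: "real (a choose j) * fact j \<le> real a ^ j"
proof -
  have "(a choose j) * fact j \<le> a ^ j" by (rule binomial_fact_pow)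
  then have "real ((a choose j) * fact j) \<le> real (a ^ j)" by (simp only: of_nat_le_iff)
  then show ?thesis by simp
qed

lemma binom_lower: assumes "j \<le> a"
  shows "(real a - real j + 1) ^ j \<le> fact j * real (a choose j)"
proof -
  have "fact j * real (a choose j) = fact j * ((real a) gchoose j)"
    by (simp add: binomial_gbinomial)
  also have "\<dots> = pochhammer (real a - real j + 1) j"
    by (simp add: gbinomial_pochhammer')
  also have "\<dots> = (\<Prod>i<j. (real a - real j + 1) + real i)"
    by (simp add: pochhammer_prod atLeast0LessThan)
  also have "\<dots> \<ge> (\<Prod>i<j. (real a - real j + 1))"
    by (rule prod_mono) (use assms in auto)
  finally show ?thesis by simp
qed

lemma sorted_image_mono:
  assumes "finite I" "strict_mono_on I g"
  shows "sorted_list_of_set (g ` I) = map g (sorted_list_of_set I)"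
proof -
  have inj: "inj_on g I" using assms(2) strict_mono_on_imp_inj_on by blast
  have "sorted_wrt (<) (map g (sorted_list_of_set I))"
    unfolding sorted_wrt_map
  proof (rule sorted_wrt_mono_rel[OF _ strict_sorted_list_of_set])
    fix x y assume "x \<in> set (sorted_list_of_set I)" "y \<in> set (sorted_list_of_set I)" "x < y"
    then show "g x < g y" using assms by (auto simp: strict_mono_on_def)
  qed
  moreover have "set (map g (sorted_list_of_set I)) = g ` I" using assms by simp
  moreover have "length (map g (sorted_list_of_set I)) = card (g ` I)"
    using assms inj by (simp add: card_image)
  ultimately show ?thesis using assms
    by (metis finite_imageI sorted_list_of_set_unique)
qed

definition NN :: "nat \<Rightarrow> nat \<Rightarrow> real \<Rightarrow> nat" where
  "NN n k x = card {I. I \<subseteq> {0..<n} \<and> card I = k \<and> real (width I) \<le> x}"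

lemma width_le_interval:
  assumes "finite J" "J \<noteq> {}" "J \<subseteq> {s..s+d}"
  shows "width J \<le> d + 1"
proof -
  have "Min J \<ge> s" using assms by (auto simp: Min_ge_iff)
  moreover have "Max J \<le> s + d" using assms by (auto simp: Max_le_iff)
  ultimately show ?thesis unfolding width_def by linarith
qed

lemma finite_subsets_n: "finite {I. I \<subseteq> {0..<(n::nat)} \<and> P I}"
  by (rule finite_subset[of _ "Pow {0..<n}"]) auto

lemma NN_lower:
  assumes k: "k \<ge> 1" and x: "x \<ge> 1"
  defines "w \<equiv> nat \<lfloor>x\<rfloor>"
  shows "(n + 1 - w) * ((w - 1) choose (k - 1)) \<le> NN n k x"
proof -
  have w1: "w \<ge> 1" using x unfolding w_def by linarith
  have wx: "real w \<le> x" using x unfolding w_def by linarith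
  define A where "A = {..<n+1-w} \<times> {D. D \<subseteq> {1..w-1} \<and> card D = k - 1}"
  define h where "h = (\<lambda>(s::nat, D::nat set). insert s ((+) s ` D))"
  have cA: "card A = (n + 1 - w) * ((w - 1) choose (k - 1))"
    unfolding A_def by (simp add: card_cartesian_product n_subsets)
  have inj: "inj_on h A"
  proof (rule inj_onI)
    fix p q assume p: "p \<in> A" and q: "q \<in> A" and e: "h p = h q"
    obtain s D where ps: "p = (s, D)" by (cases p)
    obtain s' D' where qs: "q = (s', D')" by (cases q)
    have D: "D \<subseteq> {1..w-1}" "D' \<subseteq> {1..w-1}" using p q ps qs A_def by auto
    have fin: "finite D" "finite D'" using D finite_subset by blast+
    have "Min (h p) = s" unfolding ps h_def using D fin
      by (intro Min_eqI) auto
    moreover have "Min (h q) = s'" unfolding qs h_def using D fin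
      by (intro Min_eqI) auto
    ultimately have ss: "s = s'" using e by simp
    have "(+) s ` D = (+) s ` D'"
    proof -
      have "(+) s ` D = h p - {s}" unfolding ps h_def using D by auto
      moreover have "(+) s ` D' = h q - {s}" unfolding qs h_def using D ss by auto
      ultimately show ?thesis using e by simp
    qed
    then have "D = D'" by (simp add: inj_image_eq_iff)
    then show "p = q" using ps qs ss by simp
  qed
  have sub: "h ` A \<subseteq> {I. I \<subseteq> {0..<n} \<and> card I = k \<and> real (width I) \<le> x}"
  proof
    fix J assume "J \<in> h ` A"
    then obtain s D where sD: "s < n + 1 - w" "D \<subseteq> {1..w-1}" "card D = k - 1" and J: "J = insert s ((+) s ` D)"
      unfolding A_def h_def by auto
    have fin: "finite D" using sD finite_subset by blast
    have "J \<subseteq> {s..s+(w-1)}" using J sD by auto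
    then have "width J \<le> w - 1 + 1" by (rule width_le_interval[rotated 2]) (use J fin in auto)
    then have wJ: "real (width J) \<le> x" using wx w1 by linarith
    have "J \<subseteq> {0..<n}"
    proof
      fix y assume "y \<in> J"
      then have "y \<le> s + (w - 1)" using \<open>J \<subseteq> {s..s+(w-1)}\<close> by auto
      then show "y \<in> {0..<n}" using sD w1 by auto
    qed
    moreover have "card J = k"
    proof -
      have "s \<notin> (+) s ` D" using sD by auto
      then have "card J = Suc (card ((+) s ` D))" using J fin by simp
      also have "card ((+) s ` D) = card D" by (simp add: card_image)
      finally show ?thesis using sD k by simp
    qed
    ultimately show "J \<in> {I. I \<subseteq> {0..<n} \<and> card I = k \<and> real (width I) \<le> x}" using wJ by auto
  qed
  have "card (h ` A) \<le> NN n k x" unfolding NN_def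
    by (rule card_mono[OF finite_subsets_n sub])
  then show ?thesis using cA card_image[OF inj] by simp
qed

lemma NN_upper:
  fixes x :: real
  assumes k: "k \<ge> 1"
  defines "w \<equiv> nat \<lfloor>x\<rfloor>"
  shows "NN n k x \<le> n * ((w - 1) choose (k - 1))"
proof -
  define U where "U = {I. I \<subseteq> {0..<n} \<and> card I = k \<and> real (width I) \<le> x}"
  define B where "B = {..<n} \<times> {D. D \<subseteq> {1..w-1} \<and> card D = k - 1}"
  define h where "h = (\<lambda>J::nat set. (Min J, (\<lambda>y. y - Min J) ` (J - {Min J})))"
  have cB: "card B = n * ((w - 1) choose (k - 1))"
    unfolding B_def by (simp add: card_cartesian_product n_subsets)
  have Ufacts: "finite J \<and> J \<noteq> {} \<and> J \<subseteq> {0..<n} \<and> card J = k \<and> real (width J) \<le> x" if "J \<in> U" for J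
    using that k unfolding U_def by (auto intro: finite_subset)
  have rec: "J = insert (Min J) ((+) (Min J) ` snd (h J))" if "J \<in> U" for J
  proof -
    have f: "finite J" "J \<noteq> {}" using Ufacts[OF that] by auto
    have "\<forall>y\<in>J. Min J \<le> y" using f by auto
    have mi: "Min J \<in> J" using Min_in[OF f] .
    show ?thesis unfolding h_def
    proof (simp, intro equalityI subsetI)
      fix y assume "y \<in> J"
      then show "y \<in> insert (Min J) ((+) (Min J) ` (\<lambda>y. y - Min J) ` (J - {Min J}))"
        using \<open>\<forall>y\<in>J. Min J \<le> y\<close> by (cases "y = Min J") (auto simp: image_iff intro!: bexI[of _ y])
    next
      fix y assume "y \<in> insert (Min J) ((+) (Min J) ` (\<lambda>y. y - Min J) ` (J - {Min J}))"
      then show "y \<in> J" using mi \<open>\<forall>y\<in>J. Min J \<le> y\<close> by auto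
    qed
  qed
  have inj: "inj_on h U"
  proof (rule inj_onI)
    fix J J' assume "J \<in> U" "J' \<in> U" "h J = h J'"
    then have e2: "snd (h J) = snd (h J')" and e0: "fst (h J) = fst (h J')" by simp_all
    then have e1: "Min J = Min J'" unfolding h_def by simp
    have "J = insert (Min J) ((+) (Min J) ` snd (h J))" by (rule rec) fact
    also have "\<dots> = insert (Min J') ((+) (Min J') ` snd (h J'))" by (simp only: e1 e2)
    also have "\<dots> = J'" by (rule rec[symmetric]) fact
    finally show "J = J'" .
  qed
  have sub: "h ` U \<subseteq> B"
  proof
    fix p assume "p \<in> h ` U"
    then obtain J where J: "J \<in> U" "p = h J" by auto
    note JF = Ufacts[OF J(1)]
    have mn: "Min J \<in> J" using JF Min_in by blast
    then have m1: "Min J < n" using JF by (meson atLeastLessThan_iff subsetD)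
    have wd: "Max J - Min J + 1 \<le> w" using JF unfolding width_def w_def by linarith
    have D1: "(\<lambda>y. y - Min J) ` (J - {Min J}) \<subseteq> {1..w-1}"
    proof
      fix z assume "z \<in> (\<lambda>y. y - Min J) ` (J - {Min J})"
      then obtain y where y: "y \<in> J" "y \<noteq> Min J" "z = y - Min J" by auto
      have "Min J \<le> y" "y \<le> Max J" using JF y by auto
      then show "z \<in> {1..w-1}" using y wd by auto
    qed
    have "inj_on (\<lambda>y. y - Min J) (J - {Min J})"
    proof (rule inj_onI)
      fix y z assume "y \<in> J - {Min J}" "z \<in> J - {Min J}" "y - Min J = z - Min J"
      moreover have "Min J \<le> y" "Min J \<le> z" using JF \<open>y \<in> J - {Min J}\<close> \<open>z \<in> J - {Min J}\<close> by auto
      ultimately show "y = z" by linarith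
    qed
    then have "card ((\<lambda>y. y - Min J) ` (J - {Min J})) = k - 1"
      using JF mn by (simp add: card_image)
    then show "p \<in> B" using J D1 m1 unfolding B_def h_def by auto
  qed
  have "card U \<le> card B"
    by (rule card_inj_on_le[OF inj sub]) (auto simp: B_def)
  then show ?thesis using cB unfolding NN_def U_def by simp
qed

definition tauF :: "nat list \<Rightarrow> nat \<Rightarrow> nat \<Rightarrow> nat \<Rightarrow> nat" where
  "tauF \<sigma> c r p = (if p < r * (c * length \<sigma>) then
      (p div (c * length \<sigma>)) * (c * length \<sigma>) + c * (\<sigma> ! ((p mod (c * length \<sigma>)) div c) - 1) + p mod c + 1
    else p + 1)"

definition tau :: "nat list \<Rightarrow> nat \<Rightarrow> nat \<Rightarrow> nat \<Rightarrow> nat list" where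
  "tau \<sigma> c r m = map (tauF \<sigma> c r) [0..<m]"

lemma cbt_lt: fixes b t c n :: nat assumes "b < n" "t < c" shows "c * b + t < c * n"
proof -
  have "c * b + t < c * b + c" using assms by simp
  also have "\<dots> = c * (b + 1)" by simp
  also have "\<dots> \<le> c * n" using assms by (intro mult_le_mono2) simp
  finally show ?thesis .
qed

lemma decomp:
  fixes a b t c n :: nat
  assumes "b < n" "t < c"
  shows "(a * (c * n) + c * b + t) div (c * n) = a"
    and "(a * (c * n) + c * b + t) mod (c * n) = c * b + t"
    and "(c * b + t) div c = b" and "(c * b + t) mod c = t"
    and "(a * (c * n) + c * b + t) mod c = t"
proof -
  have lt: "c * b + t < c * n"
  proof -
    have "c * b + t < c * b + c" using assms by simp
    also have "\<dots> = c * (b + 1)" by simp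
    also have "\<dots> \<le> c * n" using assms by (intro mult_le_mono2) simp
    finally show ?thesis .
  qed
  have nz: "c * n \<noteq> 0" using lt by linarith
  show "(a * (c * n) + c * b + t) div (c * n) = a"
    using lt nz by (simp add: add.assoc)
  show "(a * (c * n) + c * b + t) mod (c * n) = c * b + t"
    using lt nz by (simp add: add.assoc)
  show "(c * b + t) div c = b" using assms by simp
  show "(c * b + t) mod c = t" using assms by simp
  have "a * (c * n) + c * b + t = t + c * (a * n + b)" by (simp add: algebra_simps)
  then show "(a * (c * n) + c * b + t) mod c = t" using assms by (simp only: mod_mult_self2) simp
qed

lemma decomp_ex:
  fixes p c n :: nat
  assumes "c \<ge> 1" "n \<ge> 1"
  shows "p = (p div (c*n)) * (c*n) + c * ((p mod (c*n)) div c) + p mod c"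
    and "(p mod (c*n)) div c < n" "p mod c < c"
proof -
  have "p mod (c*n) = c * ((p mod (c*n)) div c) + (p mod (c*n)) mod c" by simp
  moreover have "(p mod (c*n)) mod c = p mod c"
    by (simp add: mod_mod_cancel)
  ultimately show "p = (p div (c*n)) * (c*n) + c * ((p mod (c*n)) div c) + p mod c"
  proof -
    have "p = p div (c*n) * (c*n) + p mod (c*n)" by (rule div_mult_mod_eq[symmetric])
    also have "p mod (c*n) = c * ((p mod (c*n)) div c) + p mod c"
      using \<open>p mod (c*n) = c * ((p mod (c*n)) div c) + (p mod (c*n)) mod c\<close> \<open>(p mod (c*n)) mod c = p mod c\<close> by simp
    finally show ?thesis by simp
  qed
  have "p mod (c*n) < c * n" using assms by simp
  then show "(p mod (c*n)) div c < n" using assms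
    by (simp add: div_less_iff_less_mult mult.commute)
  show "p mod c < c" using assms by simp
qed

lemma tauF_eq:
  assumes "b < length \<sigma>" "t < c" "a < r"
  shows "tauF \<sigma> c r (a * (c * length \<sigma>) + c * b + t) = a * (c * length \<sigma>) + c * (\<sigma> ! b - 1) + t + 1"
proof -
  let ?n = "length \<sigma>"
  have lt: "a * (c * ?n) + c * b + t < r * (c * ?n)"
  proof -
    have "c * b + t < c * ?n" using cbt_lt assms by blast
    then have "a * (c * ?n) + c * b + t < a * (c * ?n) + c * ?n" by simp
    also have "\<dots> = Suc a * (c * ?n)" by simp
    also have "\<dots> \<le> r * (c * ?n)" using assms by (intro mult_le_mono1) simp
    finally show ?thesis .
  qed
  show ?thesis unfolding tauF_def using lt decomp[OF assms(1,2)] by simp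
qed

lemma perm_nth:
  assumes "is_perm \<sigma>" "b < length \<sigma>"
  shows "\<sigma> ! b \<in> {1..length \<sigma>}"
  using assms nth_mem unfolding is_perm_def by blast

lemma tauF_range:
  assumes "is_perm \<sigma>" "c \<ge> 1" "r * (c * length \<sigma>) \<le> m" "p < m"
  shows "tauF \<sigma> c r p \<in> {1..m}"
proof (cases "p < r * (c * length \<sigma>)")
  case True
  let ?n = "length \<sigma>"
  have n1: "?n \<ge> 1" using assms unfolding is_perm_def by (simp add: Suc_leI)
  define a where "a = p div (c * ?n)"
  define b where "b = (p mod (c * ?n)) div c"
  define t where "t = p mod c"
  have pe: "p = a * (c * ?n) + c * b + t" and b: "b < ?n" and t: "t < c"
    using decomp_ex[OF assms(2) n1, of p] unfolding a_def b_def t_def by auto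
  have a: "a < r"
  proof -
    have "0 < ?n" "0 < c" using n1 assms(2) by linarith+
    then have q: "0 < c * ?n" by simp
    show ?thesis unfolding a_def using True by (simp only: div_less_iff_less_mult[OF q])
  qed
  have v: "tauF \<sigma> c r p = a * (c * ?n) + c * (\<sigma> ! b - 1) + t + 1"
    using tauF_eq[OF b t a] pe by simp
  have sb: "\<sigma> ! b - 1 < ?n" using perm_nth[OF assms(1) b] by auto
  have "c * (\<sigma> ! b - 1) + t < c * ?n" by (rule cbt_lt[OF sb t])
  then have "tauF \<sigma> c r p \<le> a * (c * ?n) + c * ?n" using v by linarith
  also have "\<dots> = Suc a * (c * ?n)" by simp
  also have "\<dots> \<le> r * (c * ?n)" using a by (intro mult_le_mono1) simp
  finally show ?thesis using v assms by auto
next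
  case False
  then show ?thesis using assms unfolding tauF_def by auto
qed

lemma tauF_surj:
  assumes "is_perm \<sigma>" "c \<ge> 1" "r * (c * length \<sigma>) \<le> m" "v \<in> {1..m}"
  shows "\<exists>p<m. tauF \<sigma> c r p = v"
proof (cases "v - 1 < r * (c * length \<sigma>)")
  case True
  let ?n = "length \<sigma>"
  have n1: "?n \<ge> 1" using assms unfolding is_perm_def by (simp add: Suc_leI)
  define a where "a = (v - 1) div (c * ?n)"
  define w where "w = ((v - 1) mod (c * ?n)) div c"
  define t where "t = (v - 1) mod c"
  have ve: "v - 1 = a * (c * ?n) + c * w + t" and w: "w < ?n" and t: "t < c"
    using decomp_ex[OF assms(2) n1, of "v - 1"] unfolding a_def w_def t_def by auto
  have a: "a < r"
  proof -
    have "0 < ?n" "0 < c" using n1 assms(2) by linarith+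
    then have q: "0 < c * ?n" by simp
    show ?thesis unfolding a_def using True by (simp only: div_less_iff_less_mult[OF q])
  qed
  have "w + 1 \<in> set \<sigma>" using assms(1) w unfolding is_perm_def by auto
  then obtain b where b: "b < ?n" "\<sigma> ! b = w + 1" by (auto simp: in_set_conv_nth)
  have "tauF \<sigma> c r (a * (c * ?n) + c * b + t) = a * (c * ?n) + c * w + t + 1"
    using tauF_eq[OF b(1) t a] b by simp
  also have "\<dots> = v" using ve assms(4) by (simp only: atLeastAtMost_iff) linarith
  finally have e: "tauF \<sigma> c r (a * (c * ?n) + c * b + t) = v" .
  have "c * b + t < c * ?n" by (rule cbt_lt[OF b(1) t])
  then have "a * (c * ?n) + c * b + t < a * (c * ?n) + c * ?n" by linarith
  also have "\<dots> = Suc a * (c * ?n)" by simp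
  also have "\<dots> \<le> r * (c * ?n)" using a by (intro mult_le_mono1) simp
  finally show ?thesis using e assms(3) by (intro exI[of _ "a * (c * ?n) + c * b + t"]) auto
next
  case False
  then show ?thesis using assms unfolding tauF_def
    by (intro exI[of _ "v - 1"]) auto
qed

lemma tau_length [simp]: "length (tau \<sigma> c r m) = m"
  unfolding tau_def by simp

lemma tau_nth: "p < m \<Longrightarrow> tau \<sigma> c r m ! p = tauF \<sigma> c r p"
  unfolding tau_def by simp

lemma tau_perm:
  assumes "is_perm \<sigma>" "c \<ge> 1" "r * (c * length \<sigma>) \<le> m" "m \<ge> 1"
  shows "is_perm (tau \<sigma> c r m)"
proof -
  have img: "tauF \<sigma> c r ` {0..<m} = {1..m}"
  proof
    show "tauF \<sigma> c r ` {0..<m} \<subseteq> {1..m}" using tauF_range[OF assms(1-3)] by auto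
    show "{1..m} \<subseteq> tauF \<sigma> c r ` {0..<m}"
    proof
      fix v assume "v \<in> {1..m}"
      then obtain p where "p < m" "tauF \<sigma> c r p = v" using tauF_surj[OF assms(1-3)] by blast
      then show "v \<in> tauF \<sigma> c r ` {0..<m}" by auto
    qed
  qed
  have "inj_on (tauF \<sigma> c r) {0..<m}"
    by (rule eq_card_imp_inj_on) (use img in simp_all)
  then have "distinct (tau \<sigma> c r m)" unfolding tau_def by (simp add: distinct_map)
  moreover have "set (tau \<sigma> c r m) = {1..m}" unfolding tau_def using img by simp
  ultimately show ?thesis using assms(4) unfolding is_perm_def by auto
qed

definition gmap :: "nat \<Rightarrow> nat \<Rightarrow> nat \<Rightarrow> (nat \<Rightarrow> nat) \<Rightarrow> nat \<Rightarrow> nat" where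
  "gmap c n a t b = a * (c * n) + c * b + t b"

definition Psi :: "nat \<Rightarrow> nat \<Rightarrow> nat \<Rightarrow> (nat \<Rightarrow> nat) \<Rightarrow> nat set \<Rightarrow> nat set" where
  "Psi c n a t I = gmap c n a t ` I"

lemma g_strict:
  assumes "t \<in> PiE I (\<lambda>_. {0..<c})"
  shows "strict_mono_on I (gmap c n a t)"
proof (rule strict_mono_onI)
  fix b b' assume "b \<in> I" "b' \<in> I" "b < b'"
  then have "t b < c" using assms by auto
  then have "c * b + t b < c * b + c" by simp
  also have "\<dots> = c * Suc b" by simp
  also have "\<dots> \<le> c * b'" using \<open>b < b'\<close> by (intro mult_le_mono2) simp
  finally show "gmap c n a t b < gmap c n a t b'" unfolding gmap_def by simp
qed

lemma g_inj: "t \<in> PiE I (\<lambda>_. {0..<c}) \<Longrightarrow> inj_on (gmap c n a t) I"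
  using g_strict strict_mono_on_imp_inj_on by blast

lemma Psi_card: "t \<in> PiE I (\<lambda>_. {0..<c}) \<Longrightarrow> card (Psi c n a t I) = card I"
  unfolding Psi_def by (rule card_image[OF g_inj])

lemma Psi_sub:
  assumes "t \<in> PiE I (\<lambda>_. {0..<c})" "I \<subseteq> {0..<n}" "a < r"
  shows "Psi c n a t I \<subseteq> {0..<r * (c * n)}"
proof
  fix x assume "x \<in> Psi c n a t I"
  then obtain b where b: "b \<in> I" "x = a * (c * n) + c * b + t b" unfolding Psi_def gmap_def by auto
  have "b < n" "t b < c" using b assms by auto
  then have "c * b + t b < c * n" by (rule cbt_lt)
  then have "x < a * (c * n) + c * n" using b by linarith
  also have "\<dots> = Suc a * (c * n)" by simp
  also have "\<dots> \<le> r * (c * n)" using assms by (intro mult_le_mono1) simp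
  finally show "x \<in> {0..<r * (c * n)}" by simp
qed

lemma Max_mono_img:
  assumes "finite I" "I \<noteq> {}" "strict_mono_on I g"
  shows "Max (g ` I) = g (Max I)" and "Min (g ` I) = g (Min I)"
proof -
  have mono: "g x \<le> g y" if "x \<in> I" "y \<in> I" "x \<le> y" for x y
  proof (cases "x = y")
    case False
    then have "x < y" using that by simp
    then show ?thesis using assms(3) that unfolding strict_mono_on_def by (meson less_imp_le)
  qed simp
  have mx: "Max I \<in> I" and mn: "Min I \<in> I" using Max_in[OF assms(1,2)] Min_in[OF assms(1,2)] .
  show "Max (g ` I) = g (Max I)"
  proof (rule Max_eqI)
    show "finite (g ` I)" using assms by simp
    show "g (Max I) \<in> g ` I" using mx by simp
    fix y assume "y \<in> g ` I"
    then obtain x where "x \<in> I" "y = g x" by auto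
    then show "y \<le> g (Max I)" using mono[OF _ mx] assms(1) by simp
  qed
  show "Min (g ` I) = g (Min I)"
  proof (rule Min_eqI)
    show "finite (g ` I)" using assms by simp
    show "g (Min I) \<in> g ` I" using mn by simp
    fix y assume "y \<in> g ` I"
    then obtain x where "x \<in> I" "y = g x" by auto
    then show "g (Min I) \<le> y" using mono[OF mn] assms(1) by simp
  qed
qed

lemma Psi_width:
  assumes "t \<in> PiE I (\<lambda>_. {0..<c})" "finite I" "I \<noteq> {}" "c \<ge> 1"
  shows "real (width (Psi c n a t I)) \<le> real c * real (width I)"
    and "real (width I) \<le> real (width (Psi c n a t I)) / real c + 2"
proof -
  let ?g = "gmap c n a t"
  define Mx where "Mx = Max I"
  define Mn where "Mn = Min I"
  have inI: "Mx \<in> I" "Mn \<in> I" unfolding Mx_def Mn_def using assms Max_in Min_in by auto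
  have le: "Mn \<le> Mx" unfolding Mx_def Mn_def using assms by simp
  have tb: "t Mx < c" "t Mn < c" using inI assms(1) by auto
  have gle: "?g Mn \<le> ?g Mx"
  proof (cases "Mn = Mx")
    case False
    then have "Mn < Mx" using le by simp
    then show ?thesis using g_strict[OF assms(1)] inI unfolding strict_mono_on_def by (meson less_imp_le)
  qed simp
  have wJ: "real (width (Psi c n a t I)) = real (?g Mx) - real (?g Mn) + 1"
    unfolding width_def Psi_def Max_mono_img[OF assms(2,3) g_strict[OF assms(1)]] Mx_def[symmetric] Mn_def[symmetric]
    using gle by simp
  have wI: "real (width I) = real Mx - real Mn + 1"
    unfolding width_def Mx_def[symmetric] Mn_def[symmetric] using le by simp
  have gd: "real (?g Mx) - real (?g Mn) = real c * (real Mx - real Mn) + real (t Mx) - real (t Mn)"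
    unfolding gmap_def by (simp add: algebra_simps)
  have t1: "real (t Mx) \<le> real c - 1" "real (t Mn) \<le> real c - 1" using tb by linarith+
  show "real (width (Psi c n a t I)) \<le> real c * real (width I)"
    unfolding wJ wI gd using t1 by (simp add: algebra_simps)
  have c0: "real c > 0" using assms by simp
  have "real c * (real (width I)) \<le> real (width (Psi c n a t I)) + 2 * real c"
    unfolding wJ wI gd using t1 by (simp add: algebra_simps)
  then show "real (width I) \<le> real (width (Psi c n a t I)) / real c + 2"
    using c0 by (simp add: field_simps)
qed

lemma gmap_lt:
  assumes "b < n" "t b < c" "a < r"
  shows "gmap c n a t b < r * (c * n)"
proof -
  have "c * b + t b < c * n" using assms by (intro cbt_lt)
  then have "gmap c n a t b < a * (c * n) + c * n" unfolding gmap_def by linarith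
  also have "\<dots> = Suc a * (c * n)" by simp
  also have "\<dots> \<le> r * (c * n)" using assms by (intro mult_le_mono1) simp
  finally show ?thesis .
qed

lemma tau_at_g:
  assumes "b < length \<sigma>" "t b < c" "a < r" "r * (c * length \<sigma>) \<le> m"
  shows "tau \<sigma> c r m ! (gmap c (length \<sigma>) a t b) = a * (c * length \<sigma>) + c * (\<sigma> ! b - 1) + t b + 1"
proof -
  have "gmap c (length \<sigma>) a t b < m" using gmap_lt[where t=t, OF assms(1-3)] assms(4) by linarith
  then show ?thesis using tau_nth tauF_eq[OF assms(1,2,3)] unfolding gmap_def by simp
qed

lemma order_key:
  assumes "is_perm \<sigma>" "b < length \<sigma>" "b' < length \<sigma>" "tb < c" "tb' < c"
    and "b = b' \<Longrightarrow> tb = tb'"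
  shows "(c * (\<sigma> ! b - 1) + tb < c * (\<sigma> ! b' - 1) + tb') \<longleftrightarrow> \<sigma> ! b < \<sigma> ! b'"
proof -
  have r1: "\<sigma> ! b \<ge> 1" "\<sigma> ! b' \<ge> 1" using perm_nth[OF assms(1)] assms(2,3) by auto
  have dist: "distinct \<sigma>" using assms(1) unfolding is_perm_def by simp
  consider "\<sigma> ! b < \<sigma> ! b'" | "\<sigma> ! b' < \<sigma> ! b" | "\<sigma> ! b = \<sigma> ! b'" by linarith
  then show ?thesis
  proof cases
    case 1
    then have "\<sigma> ! b - 1 < \<sigma> ! b' - 1" using r1 by linarith
    then have "c * (\<sigma> ! b - 1) + tb < c * (\<sigma> ! b' - 1)" using assms(4) by (rule cbt_lt)
    then show ?thesis using 1 by linarith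
  next
    case 2
    then have "\<sigma> ! b' - 1 < \<sigma> ! b - 1" using r1 by linarith
    then have "c * (\<sigma> ! b' - 1) + tb' < c * (\<sigma> ! b - 1)" using assms(5) by (rule cbt_lt)
    then show ?thesis using 2 by linarith
  next
    case 3
    then have "b = b'" using dist assms(2,3) nth_eq_iff_index_eq by blast
    then show ?thesis using assms(6) 3 by simp
  qed
qed

lemma Psi_occ:
  assumes "is_perm \<sigma>" "a < r" "I \<subseteq> {0..<length \<sigma>}" "card I = length \<pi>"
    "t \<in> PiE I (\<lambda>_. {0..<c})" "r * (c * length \<sigma>) \<le> m"
  shows "occurrence \<pi> (tau \<sigma> c r m) (Psi c (length \<sigma>) a t I) \<longleftrightarrow> occurrence \<pi> \<sigma> I"
proof -
  let ?n = "length \<sigma>" and ?g = "gmap c (length \<sigma>) a t" and ?\<tau> = "tau \<sigma> c r m"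
  have fin: "finite I" using assms(3) finite_subset by blast
  have sl: "sorted_list_of_set (Psi c ?n a t I) = map ?g (sorted_list_of_set I)"
    unfolding Psi_def by (rule sorted_image_mono[OF fin g_strict[OF assms(5)]])
  have lenI: "length (sorted_list_of_set I) = length \<pi>" using assms(4) by simp
  have sub: "Psi c ?n a t I \<subseteq> {0..<length ?\<tau>}"
    using Psi_sub[OF assms(5,3,2)] assms(6) by auto
  have cd: "card (Psi c ?n a t I) = length \<pi>" using Psi_card[OF assms(5)] assms(4) by simp
  have inI: "sorted_list_of_set I ! i \<in> I" if "i < length \<pi>" for i
    using that lenI fin by (metis nth_mem set_sorted_list_of_set)
  have key: "(?\<tau> ! (sorted_list_of_set (Psi c ?n a t I) ! i) < ?\<tau> ! (sorted_list_of_set (Psi c ?n a t I) ! j))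
      \<longleftrightarrow> (\<sigma> ! (sorted_list_of_set I ! i) < \<sigma> ! (sorted_list_of_set I ! j))"
    if "i < length \<pi>" "j < length \<pi>" for i j
  proof -
    let ?x = "sorted_list_of_set I ! i" and ?y = "sorted_list_of_set I ! j"
    have x: "?x \<in> I" "?y \<in> I" using inI that by auto
    have xn: "?x < ?n" "?y < ?n" using x assms(3) by auto
    have tx: "t ?x < c" "t ?y < c" using x assms(5) by auto
    have e1: "sorted_list_of_set (Psi c ?n a t I) ! i = ?g ?x" "sorted_list_of_set (Psi c ?n a t I) ! j = ?g ?y"
      using sl lenI that by simp_all
    show ?thesis unfolding e1 tau_at_g[where t=t, OF xn(1) tx(1) assms(2,6)] tau_at_g[where t=t, OF xn(2) tx(2) assms(2,6)]
      using order_key[OF assms(1) xn tx] by simp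
  qed
  show ?thesis unfolding occurrence_def using sub cd assms(3,4) key by auto
qed

definition Dom :: "nat \<Rightarrow> nat \<Rightarrow> nat \<Rightarrow> nat \<Rightarrow> (nat set \<Rightarrow> bool) \<Rightarrow> (nat \<times> nat set \<times> (nat \<Rightarrow> nat)) set" where
  "Dom r c n k P = {0..<r} \<times> (SIGMA I:{I. I \<subseteq> {0..<n} \<and> card I = k \<and> P I}. PiE I (\<lambda>_. {0..<c}))"

definition Phi :: "nat \<Rightarrow> nat \<Rightarrow> nat \<times> nat set \<times> (nat \<Rightarrow> nat) \<Rightarrow> nat set" where
  "Phi c n = (\<lambda>(a, I, t). Psi c n a t I)"

lemma card_Dom: "card (Dom r c n k P) = r * (c ^ k * card {I. I \<subseteq> {0..<n} \<and> card I = k \<and> P I})"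
proof -
  let ?A = "{I. I \<subseteq> {0..<n} \<and> card I = k \<and> P I}"
  have finA: "finite ?A" by (rule finite_subsets_n)
  have "card (SIGMA I:?A. PiE I (\<lambda>_. {0..<c})) = (\<Sum>I\<in>?A. card (PiE I (\<lambda>_. {0..<c})))"
    using finA by (intro card_SigmaI) (auto intro!: finite_PiE intro: finite_subset)
  also have "\<dots> = (\<Sum>I\<in>?A. c ^ k)"
  proof (rule sum.cong)
    fix I assume "I \<in> ?A"
    then have "finite I" "card I = k" using finite_subset by auto
    then show "card (PiE I (\<lambda>_. {0..<c})) = c ^ k" by (simp add: card_PiE)
  qed simp
  also have "\<dots> = c ^ k * card ?A" by simp
  finally show ?thesis unfolding Dom_def by (simp add: card_cartesian_product)
qed

lemma decomp_unique:
  fixes a b t a' b' t' c n :: nat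
  assumes "b < n" "t < c" "b' < n" "t' < c"
    and "a * (c * n) + c * b + t = a' * (c * n) + c * b' + t'"
  shows "a = a'" "b = b'" "t = t'"
proof -
  note d1 = decomp[OF assms(1,2)] and d2 = decomp[OF assms(3,4)]
  show "a = a'" using d1(1)[of a] d2(1)[of a'] assms(5) by metis
  have "c * b + t = c * b' + t'" using d1(2)[of a] d2(2)[of a'] assms(5) by metis
  then show "b = b'" "t = t'" using d1(3,4) d2(3,4) by metis+
qed

lemma Phi_inj:
  assumes "k \<ge> 1"
  shows "inj_on (Phi c n) (Dom r c n k P)"
proof (rule inj_onI)
  fix x y assume x: "x \<in> Dom r c n k P" and y: "y \<in> Dom r c n k P" and e: "Phi c n x = Phi c n y"
  obtain a I t where xs: "x = (a, I, t)" by (cases x) auto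
  obtain a' I' t' where ys: "y = (a', I', t')" by (cases y) auto
  have I: "I \<subseteq> {0..<n}" "card I = k" "t \<in> PiE I (\<lambda>_. {0..<c})" using x xs unfolding Dom_def by auto
  have I': "I' \<subseteq> {0..<n}" "card I' = k" "t' \<in> PiE I' (\<lambda>_. {0..<c})" using y ys unfolding Dom_def by auto
  have eq: "gmap c n a t ` I = gmap c n a' t' ` I'" using e xs ys unfolding Phi_def Psi_def by simp
  have one: "a = a' \<and> b \<in> I' \<and> t b = t' b"
    if "b \<in> I" "gmap c n a t ` I = gmap c n a' t' ` I'" "I \<subseteq> {0..<n}" "I' \<subseteq> {0..<n}"
      "t \<in> PiE I (\<lambda>_. {0..<c})" "t' \<in> PiE I' (\<lambda>_. {0..<c})"
    for a a' I I' t t' b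
  proof -
    have "gmap c n a t b \<in> gmap c n a' t' ` I'" using that by blast
    then obtain b' where b': "b' \<in> I'" "gmap c n a t b = gmap c n a' t' b'" by auto
    have h: "b < n" "t b < c" "b' < n" "t' b' < c" using that b' by auto
    note u = decomp_unique[OF h b'(2)[unfolded gmap_def]]
    then show ?thesis using b' by simp
  qed
  have "I \<noteq> {}" using I assms by auto
  then obtain b0 where "b0 \<in> I" by auto
  have aa: "a = a'" using one[OF \<open>b0 \<in> I\<close> eq I(1) I'(1) I(3) I'(3)] by simp
  have II: "I = I'"
  proof
    show "I \<subseteq> I'" using one[OF _ eq I(1) I'(1) I(3) I'(3)] by blast
    show "I' \<subseteq> I" using one[OF _ eq[symmetric] I'(1) I(1) I'(3) I(3)] by blast
  qed
  have tt: "t = t'"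
  proof (rule extensionalityI)
    show "t \<in> extensional I" "t' \<in> extensional I" using I(3) I'(3) II by (auto simp: PiE_iff)
    fix b assume "b \<in> I"
    then show "t b = t' b" using one[OF _ eq I(1) I'(1) I(3) I'(3)] by blast
  qed
  show "x = y" using xs ys aa II tt by simp
qed

definition OCC :: "nat list \<Rightarrow> nat list \<Rightarrow> real \<Rightarrow> nat" where
  "OCC \<pi> \<sigma> x = card {I. occurrence \<pi> \<sigma> I \<and> real (width I) \<le> x}"

lemma rho_eq: "rho x \<pi> \<sigma> = real (OCC \<pi> \<sigma> x) / real (NN (length \<sigma>) (length \<pi>) x)"
  unfolding rho_def OCC_def NN_def by simp

lemma occ_set_eq: "{I. occurrence \<pi> \<sigma> I \<and> real (width I) \<le> x} =
  {I. I \<subseteq> {0..<length \<sigma>} \<and> card I = length \<pi> \<and> (occurrence \<pi> \<sigma> I \<and> real (width I) \<le> x)}"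
  unfolding occurrence_def by auto

lemma finite_occ: "finite {I. occurrence \<pi> \<sigma> I \<and> real (width I) \<le> x}"
  unfolding occ_set_eq by (rule finite_subsets_n)

lemma finite_U: "finite {I. I \<subseteq> {0..<n} \<and> card I = k \<and> real (width I) \<le> x}"
  by (rule finite_subsets_n)

locale setting =
  fixes \<sigma> :: "nat list" and \<pi> :: "nat list" and c r m :: nat and L f0 :: real
  assumes perm: "is_perm \<sigma>" and k1: "length \<pi> \<ge> 1" and c1: "c \<ge> 1" and r1: "r \<ge> 1"
    and rm: "r * (c * length \<sigma>) \<le> m" and cf: "real c * f0 \<le> L"
begin

abbreviation "n \<equiv> length \<sigma>"
abbreviation "k \<equiv> length \<pi>"
abbreviation "\<tau> \<equiv> tau \<sigma> c r m"
abbreviation "M \<equiv> r * c ^ k"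

lemma Dom_mem:
  assumes "(a, I, t) \<in> Dom r c n k P"
  shows "a < r" "I \<subseteq> {0..<n}" "card I = k" "P I" "t \<in> PiE I (\<lambda>_. {0..<c})" "finite I" "I \<noteq> {}"
  using assms k1 finite_subset unfolding Dom_def by auto

lemma Phi_props:
  assumes "(a, I, t) \<in> Dom r c n k P"
  shows "Phi c n (a, I, t) \<subseteq> {0..<m}" "card (Phi c n (a, I, t)) = k"
    "occurrence \<pi> \<tau> (Phi c n (a, I, t)) \<longleftrightarrow> occurrence \<pi> \<sigma> I"
    "real (width (Phi c n (a, I, t))) \<le> real c * real (width I)"
    "real (width I) \<le> real (width (Phi c n (a, I, t))) / real c + 2"
proof -
  note D = Dom_mem[OF assms]
  show "Phi c n (a, I, t) \<subseteq> {0..<m}" using Psi_sub[OF D(5,2,1)] rm unfolding Phi_def by auto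
  show "card (Phi c n (a, I, t)) = k" using Psi_card[OF D(5)] D(3) unfolding Phi_def by simp
  show "occurrence \<pi> \<tau> (Phi c n (a, I, t)) \<longleftrightarrow> occurrence \<pi> \<sigma> I"
    unfolding Phi_def using Psi_occ[OF perm D(1,2,3,5) rm] by simp
  show "real (width (Phi c n (a, I, t))) \<le> real c * real (width I)"
    "real (width I) \<le> real (width (Phi c n (a, I, t))) / real c + 2"
    unfolding Phi_def using Psi_width[OF D(5,6,7) c1] by simp_all
qed

lemma R1: "M * OCC \<pi> \<sigma> f0 \<le> OCC \<pi> \<tau> L"
proof -
  let ?P = "\<lambda>I. occurrence \<pi> \<sigma> I \<and> real (width I) \<le> f0"
  have "M * OCC \<pi> \<sigma> f0 = card (Dom r c n k ?P)"
    unfolding card_Dom OCC_def by (subst occ_set_eq) (simp only: mult.assoc)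
  also have "\<dots> = card (Phi c n ` Dom r c n k ?P)" using card_image[OF Phi_inj[OF k1]] by simp
  also have "\<dots> \<le> OCC \<pi> \<tau> L" unfolding OCC_def
  proof (rule card_mono[OF finite_occ], rule subsetI)
    fix J assume "J \<in> Phi c n ` Dom r c n k ?P"
    then obtain a I t where x: "(a, I, t) \<in> Dom r c n k ?P" "J = Phi c n (a, I, t)" by auto
    note D = Dom_mem[OF x(1)] and Q = Phi_props[OF x(1)]
    have "real (width J) \<le> real c * f0" using Q(4) D(4) x(2) c1
      by (meson mult_left_mono of_nat_0_le_iff order_trans)
    then show "J \<in> {I. occurrence \<pi> \<tau> I \<and> real (width I) \<le> L}" using Q(3) D(4) x(2) cf by auto
  qed
  finally show ?thesis .
qed

lemma R2: "M * NN n k f0 \<le> NN m k L"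
proof -
  let ?P = "\<lambda>I. real (width I) \<le> f0"
  have "M * NN n k f0 = card (Dom r c n k ?P)"
    unfolding card_Dom NN_def by simp
  also have "\<dots> = card (Phi c n ` Dom r c n k ?P)" using card_image[OF Phi_inj[OF k1]] by simp
  also have "\<dots> \<le> NN m k L" unfolding NN_def
  proof (rule card_mono[OF finite_U], rule subsetI)
    fix J assume "J \<in> Phi c n ` Dom r c n k ?P"
    then obtain a I t where x: "(a, I, t) \<in> Dom r c n k ?P" "J = Phi c n (a, I, t)" by auto
    note D = Dom_mem[OF x(1)] and Q = Phi_props[OF x(1)]
    have "real (width J) \<le> real c * f0" using Q(4) D(4) x(2) c1
      by (meson mult_left_mono of_nat_0_le_iff order_trans)
    then show "J \<in> {I. I \<subseteq> {0..<m} \<and> card I = k \<and> real (width I) \<le> L}" using Q(1,2) x(2) cf by auto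
  qed
  finally show ?thesis .
qed

lemma B_sub: "Phi c n ` Dom r c n k (\<lambda>I. real (width I) \<le> f0) \<subseteq> {I. I \<subseteq> {0..<m} \<and> card I = k \<and> real (width I) \<le> L}"
proof
  fix J assume "J \<in> Phi c n ` Dom r c n k (\<lambda>I. real (width I) \<le> f0)"
  then obtain a I t where x: "(a, I, t) \<in> Dom r c n k (\<lambda>I. real (width I) \<le> f0)" "J = Phi c n (a, I, t)" by auto
  note D = Dom_mem[OF x(1)] and Q = Phi_props[OF x(1)]
  have "real (width J) \<le> real c * f0" using Q(4) D(4) x(2) c1
    by (meson mult_left_mono of_nat_0_le_iff order_trans)
  then show "J \<in> {I. I \<subseteq> {0..<m} \<and> card I = k \<and> real (width I) \<le> L}" using Q(1,2) x(2) cf by auto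
qed

lemma card_B: "card (Phi c n ` Dom r c n k (\<lambda>I. real (width I) \<le> f0)) = M * NN n k f0"
  using card_image[OF Phi_inj[OF k1]] unfolding card_Dom NN_def by simp

lemma R3: "OCC \<pi> \<tau> L + M * NN n k f0 \<le> M * OCC \<pi> \<sigma> (L / real c + 2) + NN m k L"
proof -
  let ?l2 = "L / real c + 2"
  let ?PA = "\<lambda>I. occurrence \<pi> \<sigma> I \<and> real (width I) \<le> ?l2"
  let ?A = "Phi c n ` Dom r c n k ?PA"
  let ?B = "Phi c n ` Dom r c n k (\<lambda>I. real (width I) \<le> f0)"
  let ?U = "{I. I \<subseteq> {0..<m} \<and> card I = k \<and> real (width I) \<le> L}"
  let ?T = "{J. occurrence \<pi> \<tau> J \<and> real (width J) \<le> L}"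
  have cA: "card ?A = M * OCC \<pi> \<sigma> ?l2"
  proof -
    have "M * OCC \<pi> \<sigma> ?l2 = card (Dom r c n k ?PA)"
      unfolding card_Dom OCC_def by (subst occ_set_eq) (simp only: mult.assoc)
    also have "\<dots> = card ?A" using card_image[OF Phi_inj[OF k1]] by simp
    finally show ?thesis by simp
  qed
  have c0: "real c > 0" using c1 by simp
  have sub: "?T \<subseteq> ?A \<union> (?U - ?B)"
  proof
    fix J assume J: "J \<in> ?T"
    show "J \<in> ?A \<union> (?U - ?B)"
    proof (cases "J \<in> ?B")
      case True
      then obtain a I t where x: "(a, I, t) \<in> Dom r c n k (\<lambda>I. real (width I) \<le> f0)" "J = Phi c n (a, I, t)" by auto
      note D = Dom_mem[OF x(1)] and Q = Phi_props[OF x(1)]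
      have occ: "occurrence \<pi> \<sigma> I" using Q(3) J x(2) by simp
      have "real (width J) / real c \<le> L / real c" using J c0 by (simp add: divide_right_mono)
      then have w: "real (width I) \<le> ?l2" using Q(5) unfolding x(2)[symmetric] by linarith
      have "(a, I, t) \<in> Dom r c n k ?PA" using D occ w unfolding Dom_def by auto
      then show ?thesis using x(2) by blast
    next
      case False
      have "J \<in> ?U" using J unfolding occurrence_def by auto
      then show ?thesis using False by blast
    qed
  qed
  have finA: "finite ?A"
  proof (rule finite_subset[of _ "Pow {0..<m}"])
    show "?A \<subseteq> Pow {0..<m}"
    proof
      fix J assume "J \<in> ?A"
      then obtain a I t where x: "(a, I, t) \<in> Dom r c n k ?PA" "J = Phi c n (a, I, t)" by auto
      show "J \<in> Pow {0..<m}" using Phi_props(1)[OF x(1)] x(2) by simp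
    qed
  qed simp
  have "OCC \<pi> \<tau> L \<le> card (?A \<union> (?U - ?B))"
    unfolding OCC_def by (rule card_mono) (use finA finite_U sub in auto)
  also have "\<dots> \<le> card ?A + card (?U - ?B)" by (rule card_Un_le)
  also have "card (?U - ?B) = card ?U - card ?B" by (rule card_Diff_subset) (use B_sub finite_subset[OF B_sub finite_U] in auto)
  finally have "OCC \<pi> \<tau> L \<le> M * OCC \<pi> \<sigma> ?l2 + (NN m k L - M * NN n k f0)"
    unfolding cA card_B NN_def by simp
  moreover have "M * NN n k f0 \<le> NN m k L" by (rule R2)
  ultimately show ?thesis by linarith
qed

end

lemma R4:
  assumes "x \<le> y"
  shows "OCC \<pi> \<sigma> y + NN (length \<sigma>) (length \<pi>) x \<le> OCC \<pi> \<sigma> x + NN (length \<sigma>) (length \<pi>) y"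
proof -
  let ?Oy = "{I. occurrence \<pi> \<sigma> I \<and> real (width I) \<le> y}"
  let ?Ox = "{I. occurrence \<pi> \<sigma> I \<and> real (width I) \<le> x}"
  let ?Ux = "{I. I \<subseteq> {0..<length \<sigma>} \<and> card I = length \<pi> \<and> real (width I) \<le> x}"
  let ?Uy = "{I. I \<subseteq> {0..<length \<sigma>} \<and> card I = length \<pi> \<and> real (width I) \<le> y}"
  have sub: "?Oy \<subseteq> ?Ox \<union> (?Uy - ?Ux)" unfolding occurrence_def by auto
  have sxy: "?Ux \<subseteq> ?Uy" using assms by auto
  have "card ?Oy \<le> card (?Ox \<union> (?Uy - ?Ux))"
    by (rule card_mono) (use finite_occ finite_U sub in auto)
  also have "\<dots> \<le> card ?Ox + card (?Uy - ?Ux)" by (rule card_Un_le)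
  also have "card (?Uy - ?Ux) = card ?Uy - card ?Ux" by (rule card_Diff_subset) (use sxy finite_U finite_subset in auto)
  finally have "card ?Oy \<le> card ?Ox + (card ?Uy - card ?Ux)" .
  moreover have "card ?Ux \<le> card ?Uy" by (rule card_mono[OF finite_U sxy])
  ultimately show ?thesis unfolding OCC_def NN_def by linarith
qed

lemma est1:
  fixes Ox N Oy N2 Ot Nt M q' s' :: real
  assumes "N > 0" "M > 0" "Ox \<ge> 0" "Ox \<le> N" "N \<le> N2"
    "M * N \<le> Nt" "M * Ox \<le> Ot" "Ot + M * N \<le> M * Oy + Nt" "Oy + N \<le> Ox + N2"
    "q' \<le> M * N / Nt" "N2 / N \<le> s'"
  shows "\<bar>Ot / Nt - Ox / N\<bar> \<le> (1 - q') + (s' - 1)"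
proof -
  have Nt: "Nt > 0" using assms(1,2,6) by (smt (verit) mult_pos_pos)
  define q where "q = M * N / Nt"
  define s where "s = N2 / N"
  define p where "p = Ox / N"
  have q1: "q \<le> 1" "q \<ge> 0" unfolding q_def using Nt assms by (auto simp: field_simps)
  have s1: "s \<ge> 1" unfolding s_def using assms by (auto simp: field_simps)
  have p1: "p \<le> 1" "p \<ge> 0" unfolding p_def using assms by (auto simp: field_simps)
  have lo: "q * p \<le> Ot / Nt"
  proof -
    have "q * p = M * Ox / Nt" unfolding q_def p_def using assms(1) by (simp add: field_simps)
    also have "\<dots> \<le> Ot / Nt" using assms(7) Nt by (simp add: divide_right_mono)
    finally show ?thesis .
  qed
  have hi: "Ot / Nt \<le> q * p + q * (s - 1) + (1 - q)"
  proof -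
    have "Ot \<le> M * (Ox + N2 - N) + Nt - M * N"
    proof -
      have "M * Oy \<le> M * (Ox + N2 - N)" using assms(2,9) by (intro mult_left_mono) auto
      then show ?thesis using assms(8) by linarith
    qed
    then have "Ot / Nt \<le> (M * (Ox + N2 - N) + Nt - M * N) / Nt" using Nt by (simp add: divide_right_mono)
    also have "\<dots> = q * p + q * (s - 1) + (1 - q)"
      unfolding q_def p_def s_def using Nt assms(1) by (simp add: field_simps)
    finally show ?thesis .
  qed
  have "Ot / Nt - p \<le> (s - 1) + (1 - q)"
  proof -
    have "q * p + q * (s - 1) + (1 - q) - p = (q - 1) * p + q * (s - 1) + (1 - q)" by (simp add: algebra_simps)
    moreover have "(q - 1) * p \<le> 0" using q1 p1 by (simp add: mult_nonpos_nonneg)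
    moreover have "q * (s - 1) \<le> s - 1" using q1 s1 by (simp add: mult_left_le_one_le)
    ultimately show ?thesis using hi by linarith
  qed
  moreover have "p - Ot / Nt \<le> 1 - q"
  proof -
    have "p - q * p = (1 - q) * p" by (simp add: algebra_simps)
    also have "\<dots> \<le> 1 - q" using q1 p1 by (simp add: mult_left_le)
    finally show ?thesis using lo by linarith
  qed
  moreover have "q' \<le> q" "s \<le> s'" using assms(10,11) unfolding q_def s_def by auto
  moreover have "s - 1 \<ge> 0" using s1 by simp
  ultimately show ?thesis unfolding p_def abs_le_iff by linarith
qed

lemma NN_pos_lower:
  assumes k: "k \<ge> 1" and f: "real k + 1 \<le> f0" and fn: "f0 < real n"
  shows "(real n - f0) * (f0 - real k) ^ (k - 1) \<le> fact (k - 1) * real (NN n k f0)"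
proof -
  define w where "w = nat \<lfloor>f0\<rfloor>"
  have wf: "real w \<le> f0" "real w > f0 - 1" using f unfolding w_def by linarith+
  have wk: "w \<ge> k + 1" using f unfolding w_def by linarith
  have wn: "w \<le> n" using wf fn by linarith
  have L1: "(n + 1 - w) * ((w - 1) choose (k - 1)) \<le> NN n k f0"
    using NN_lower[OF k, of f0 n] f unfolding w_def by linarith
  have b: "(real (w - 1) - real (k - 1) + 1) ^ (k - 1) \<le> fact (k - 1) * real ((w - 1) choose (k - 1))"
    by (rule binom_lower) (use wk in simp)
  have e1: "real (w - 1) - real (k - 1) + 1 = real w - real k + 1" using wk k by simp
  have b2: "(f0 - real k) ^ (k - 1) \<le> (real (w - 1) - real (k - 1) + 1) ^ (k - 1)"
    unfolding e1 by (rule power_mono) (use wf f in auto)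
  have n1: "real n - f0 \<le> real (n + 1 - w)" using wn wf by simp
  have "(real n - f0) * (f0 - real k) ^ (k - 1) \<le> real (n + 1 - w) * (fact (k - 1) * real ((w - 1) choose (k - 1)))"
    by (rule mult_mono[OF n1 order_trans[OF b2 b]]) (use fn f in auto)
  also have "\<dots> = fact (k - 1) * real ((n + 1 - w) * ((w - 1) choose (k - 1)))" by simp
  also have "\<dots> \<le> fact (k - 1) * real (NN n k f0)" using L1 by (intro mult_left_mono) (simp only: of_nat_le_iff, simp)
  finally show ?thesis .
qed

lemma NN_upper2:
  assumes k: "k \<ge> 1" and x: "x \<ge> 0"
  shows "fact (k - 1) * real (NN n k x) \<le> real n * x ^ (k - 1)"
proof -
  define w where "w = nat \<lfloor>x\<rfloor>"
  have wx: "real (w - 1) \<le> x" unfolding w_def using x by linarith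
  have U: "NN n k x \<le> n * ((w - 1) choose (k - 1))" using NN_upper[OF k, of n x] unfolding w_def by simp
  have "fact (k - 1) * real (NN n k x) \<le> fact (k - 1) * (real n * real ((w - 1) choose (k - 1)))"
    using U by (intro mult_left_mono) (simp_all only: of_nat_mult[symmetric] of_nat_le_iff, auto)
  also have "\<dots> = real n * (real ((w - 1) choose (k - 1)) * fact (k - 1))" by simp
  also have "\<dots> \<le> real n * (real (w - 1) ^ (k - 1))" by (intro mult_left_mono binom_upper) auto
  also have "\<dots> \<le> real n * x ^ (k - 1)" by (intro mult_left_mono power_mono wx) auto
  finally show ?thesis .
qed

definition qlow :: "nat \<Rightarrow> nat \<Rightarrow> nat \<Rightarrow> real \<Rightarrow> nat \<Rightarrow> real" where
  "qlow k r c f0 n = (1 / (1 + 1 / real r)) * (1 - f0 / real n) * ((1 - real k / f0) / (1 + 1 / real c)) ^ (k - 1)"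

definition shigh :: "nat \<Rightarrow> nat \<Rightarrow> real \<Rightarrow> nat \<Rightarrow> real" where
  "shigh k c f0 n = (1 / (1 - f0 / real n)) * ((1 + 1 / real c + 2 / f0) / (1 - real k / f0)) ^ (k - 1)"

lemma q_bound:
  fixes M N Nt A B :: real
  assumes "F > 0" "A > 0" "B > 0" "M \<ge> 0" "A \<le> F * N" "F * Nt \<le> B" "Nt > 0"
  shows "M * A / B \<le> M * N / Nt"
proof -
  have "M * A / B = M * (A / F) / (B / F)" using assms by (simp add: field_simps)
  also have "\<dots> \<le> M * N / (B / F)"
    using assms by (intro divide_right_mono mult_left_mono) (auto simp: field_simps)
  also have "\<dots> \<le> M * N / Nt"
  proof (rule divide_left_mono)
    show "Nt \<le> B / F" using assms by (simp add: field_simps)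
    have "F * N > 0" using assms by linarith
    then have "N > 0" using assms(1) by (simp add: zero_less_mult_iff)
    then show "0 \<le> M * N" using assms by simp
    show "0 < B / F * Nt" using assms by simp
  qed
  finally show ?thesis .
qed

lemma est_main:
  assumes perm: "is_perm \<sigma>" and k1: "length \<pi> \<ge> 1" and c1: "c \<ge> 1" and r1: "r \<ge> 1"
    and rm: "r * (c * length \<sigma>) \<le> m" and mr: "real m < (real r + 1) * (real c * real (length \<sigma>))"
    and cf: "real c * f0 \<le> L" and Lc: "L < (real c + 1) * f0"
    and fk: "real (length \<pi>) + 1 \<le> f0" and fn: "f0 < real (length \<sigma>)"
  shows "\<bar>rho L \<pi> (tau \<sigma> c r m) - rho f0 \<pi> \<sigma>\<bar>
     \<le> (1 - qlow (length \<pi>) r c f0 (length \<sigma>)) + (shigh (length \<pi>) c f0 (length \<sigma>) - 1)"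
proof -
  interpret setting \<sigma> \<pi> c r m L f0 using assms by unfold_locales auto
  define l2 where "l2 = L / real c + 2"
  define F :: real where "F = fact (k - 1)"
  have F0: "F > 0" unfolding F_def by simp
  have c0: "real c > 0" using c1 by simp
  have f0pos: "f0 > 0" using fk by linarith
  have fkpos: "f0 - real k > 0" using fk by linarith
  have nf: "real n - f0 > 0" using fn by linarith
  have Lpos: "L > 0" using cf c0 f0pos by (smt (verit) mult_pos_pos)
  have Nlow: "(real n - f0) * (f0 - real k) ^ (k - 1) \<le> F * real (NN n k f0)"
    unfolding F_def by (rule NN_pos_lower[OF k1 fk fn])
  have Apos: "(real n - f0) * (f0 - real k) ^ (k - 1) > 0" using nf fkpos by simp
  have Npos: "real (NN n k f0) > 0"
  proof -
    have "F * real (NN n k f0) > 0" using Nlow Apos by linarith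
    then show ?thesis using F0 by (simp add: zero_less_mult_iff)
  qed
  have Mpos: "real M > 0" using c1 r1 by simp
  have R1': "real M * real (OCC \<pi> \<sigma> f0) \<le> real (OCC \<pi> \<tau> L)"
    using R1 by (simp only: of_nat_mult[symmetric] of_nat_le_iff)
  have R2': "real M * real (NN n k f0) \<le> real (NN m k L)"
    using R2 by (simp only: of_nat_mult[symmetric] of_nat_le_iff)
  have R3': "real (OCC \<pi> \<tau> L) + real M * real (NN n k f0) \<le> real M * real (OCC \<pi> \<sigma> l2) + real (NN m k L)"
    using R3 unfolding l2_def by (simp only: of_nat_mult[symmetric] of_nat_add[symmetric] of_nat_le_iff)
  have fl2: "f0 \<le> l2"
  proof -
    have "f0 \<le> L / real c" using cf c0 by (simp add: field_simps)
    then show ?thesis unfolding l2_def by linarith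
  qed
  have R4': "real (OCC \<pi> \<sigma> l2) + real (NN n k f0) \<le> real (OCC \<pi> \<sigma> f0) + real (NN n k l2)"
    using R4[OF fl2, of \<pi> \<sigma>] by (simp only: of_nat_add[symmetric] of_nat_le_iff)
  have ON: "real (OCC \<pi> \<sigma> f0) \<le> real (NN n k f0)"
    unfolding OCC_def NN_def of_nat_le_iff
    by (rule card_mono[OF finite_U]) (auto simp: occurrence_def)
  have NN2: "real (NN n k f0) \<le> real (NN n k l2)"
    unfolding NN_def of_nat_le_iff
    by (rule card_mono[OF finite_U]) (use fl2 in auto)
  have Ntpos: "real (NN m k L) > 0" using R2' Mpos Npos by (smt (verit) mult_pos_pos)
  have Ntup: "F * real (NN m k L) \<le> real m * L ^ (k - 1)"
    unfolding F_def by (rule NN_upper2[OF k1]) (use Lpos in simp)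
  have Bpos: "real m * L ^ (k - 1) > 0" using rm c1 r1 Lpos
  proof -
    have "n \<ge> 1" using perm unfolding is_perm_def by (simp add: Suc_leI)
    then have "r * (c * n) \<ge> 1" using c1 r1 by simp
    then have "real m \<ge> 1" using rm by linarith
    then show ?thesis using Lpos by simp
  qed
  have mpos: "real m > 0" using Bpos Lpos by (auto simp: zero_less_mult_iff)
  have qb: "real M * ((real n - f0) * (f0 - real k) ^ (k - 1)) / (real m * L ^ (k - 1))
      \<le> real M * real (NN n k f0) / real (NN m k L)"
    by (rule q_bound[OF F0 Apos Bpos _ Nlow Ntup Ntpos]) simp
  have qe: "real M * ((real n - f0) * (f0 - real k) ^ (k - 1)) / (real m * L ^ (k - 1))
      = (real r * real c * real n / real m) * ((real n - f0) / real n) * (real c * (f0 - real k) / L) ^ (k - 1)"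
  proof -
    have ck: "real c ^ k = real c * real c ^ (k - 1)" using k1 by (metis One_nat_def Suc_pred' less_eq_Suc_le power_Suc)
    have n0: "real n > 0" using fn f0pos by linarith
    have m0: "real m > 0" and Lk: "L ^ (k - 1) > 0" using Bpos Lpos by (auto simp: zero_less_mult_iff)
    have pw: "(real c * (f0 - real k) / L) ^ (k - 1) = real c ^ (k - 1) * (f0 - real k) ^ (k - 1) / L ^ (k - 1)"
      by (simp add: power_mult_distrib power_divide)
    have alg: "rr * (cc * ccp) * ((nn - ff) * P) / (mm * Lk) = (rr * cc * nn / mm) * ((nn - ff) / nn) * (ccp * P / Lk)"
      if "nn > 0" "mm > 0" "Lk > 0" for rr cc ccp nn ff P mm Lk :: real
      using that by (simp add: field_simps)
    have "real M * ((real n - f0) * (f0 - real k) ^ (k - 1)) / (real m * L ^ (k - 1))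
       = real r * (real c * real c ^ (k - 1)) * ((real n - f0) * (f0 - real k) ^ (k - 1)) / (real m * L ^ (k - 1))"
      by (simp only: of_nat_mult of_nat_power ck)
    also have "\<dots> = (real r * real c * real n / real m) * ((real n - f0) / real n) * (real c ^ (k - 1) * (f0 - real k) ^ (k - 1) / L ^ (k - 1))"
      by (rule alg[OF n0 m0 Lk])
    finally show ?thesis unfolding pw .
  qed
  have q1: "1 / (1 + 1 / real r) \<le> real r * real c * real n / real m"
  proof -
    have r0: "real r > 0" using r1 by simp
    have n0: "real n > 0" using fn f0pos by linarith
    have e1: "1 / (1 + 1 / real r) = real r / (real r + 1)" using r0 by (simp add: field_simps)
    have e2: "real r * real c * real n / ((real r + 1) * (real c * real n)) = real r / (real r + 1)"
      using c0 n0 by (simp add: mult.assoc)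
    have "1 / (1 + 1 / real r) = real r * real c * real n / ((real r + 1) * (real c * real n))"
      using e1 e2 by simp
    also have "\<dots> \<le> real r * real c * real n / real m"
      by (rule divide_left_mono) (use mr r0 c0 n0 mpos in \<open>auto intro!: mult_pos_pos\<close>)
    finally show ?thesis .
  qed
  have q2: "1 - f0 / real n = (real n - f0) / real n"
  proof -
    have "real n > 0" using fn f0pos by linarith
    then show ?thesis by (simp add: diff_divide_distrib)
  qed
  have q3: "(1 - real k / f0) / (1 + 1 / real c) \<le> real c * (f0 - real k) / L"
  proof -
    have "(1 - real k / f0) / (1 + 1 / real c) = real c * (f0 - real k) / ((real c + 1) * f0)"
      using c0 f0pos by (simp add: field_simps)
    also have "\<dots> \<le> real c * (f0 - real k) / L"
      by (rule divide_left_mono) (use Lc c0 fkpos Lpos in auto)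
    finally show ?thesis .
  qed
  have q3nn: "0 \<le> (1 - real k / f0) / (1 + 1 / real c)"
    using fkpos f0pos c0 by (simp add: field_simps)
  have qfinal: "qlow k r c f0 n \<le> real M * real (NN n k f0) / real (NN m k L)"
  proof -
    have "qlow k r c f0 n \<le> (real r * real c * real n / real m) * ((real n - f0) / real n) * (real c * (f0 - real k) / L) ^ (k - 1)"
      unfolding qlow_def q2
      by (intro mult_mono q1 power_mono q3 q3nn order_refl) (use nf fn f0pos Lpos c0 fkpos in auto)
    then show ?thesis using qb qe by linarith
  qed
  have l2pos: "l2 \<ge> 0" unfolding l2_def using Lpos c0 by simp
  have N2up: "F * real (NN n k l2) \<le> real n * l2 ^ (k - 1)"
    unfolding F_def by (rule NN_upper2[OF k1 l2pos])
  have sb: "real (NN n k l2) / real (NN n k f0) \<le> (real n * l2 ^ (k - 1)) / ((real n - f0) * (f0 - real k) ^ (k - 1))"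
  proof -
    have "real (NN n k l2) / real (NN n k f0) = (F * real (NN n k l2)) / (F * real (NN n k f0))"
      using F0 by simp
    also have "\<dots> \<le> (real n * l2 ^ (k - 1)) / (F * real (NN n k f0))"
      by (rule divide_right_mono[OF N2up]) (use F0 Npos in simp)
    also have "\<dots> \<le> (real n * l2 ^ (k - 1)) / ((real n - f0) * (f0 - real k) ^ (k - 1))"
      by (rule divide_left_mono[OF Nlow]) (use Apos l2pos fn F0 Npos in \<open>auto intro!: mult_pos_pos\<close>)
    finally show ?thesis .
  qed
  have se: "(real n * l2 ^ (k - 1)) / ((real n - f0) * (f0 - real k) ^ (k - 1))
      = (1 / (1 - f0 / real n)) * (l2 / (f0 - real k)) ^ (k - 1)"
  proof -
    have alg: "nn * X / ((nn - ff) * P) = (1 / (1 - ff / nn)) * (X / P)"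
      if "nn > 0" "nn - ff > 0" "P > 0" for nn ff X P :: real
    proof -
      have "1 - ff / nn = (nn - ff) / nn" using that by (simp add: diff_divide_distrib)
      then show ?thesis using that by simp
    qed
    have "real n > 0" using fn f0pos by linarith
    moreover have "(f0 - real k) ^ (k - 1) > 0" using fkpos by simp
    ultimately show ?thesis unfolding power_divide using alg nf by simp
  qed
  have s3: "l2 / (f0 - real k) \<le> (1 + 1 / real c + 2 / f0) / (1 - real k / f0)"
  proof -
    have "l2 \<le> f0 + f0 / real c + 2"
    proof -
      have "L / real c \<le> (real c + 1) * f0 / real c" using Lc c0 by (simp add: divide_right_mono)
      also have "\<dots> = f0 + f0 / real c" using c0 by (simp add: field_simps)
      finally show ?thesis unfolding l2_def by linarith
    qed
    then have "l2 / (f0 - real k) \<le> (f0 + f0 / real c + 2) / (f0 - real k)"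
      using fkpos by (simp add: divide_right_mono)
    also have "\<dots> = (1 + 1 / real c + 2 / f0) / (1 - real k / f0)"
      using f0pos fkpos c0 by (simp add: field_simps)
    finally show ?thesis .
  qed
  have sfinal: "real (NN n k l2) / real (NN n k f0) \<le> shigh k c f0 n"
  proof -
    have "(1 / (1 - f0 / real n)) * (l2 / (f0 - real k)) ^ (k - 1) \<le> shigh k c f0 n"
      unfolding shigh_def
    proof (intro mult_left_mono power_mono s3)
      show "0 \<le> l2 / (f0 - real k)" using l2pos fkpos by simp
      have "real n > 0" using fn f0pos by linarith
      then have "f0 / real n < 1" using fn by simp
      then show "0 \<le> 1 / (1 - f0 / real n)" by simp
    qed
    then show ?thesis using sb se by linarith
  qed
  have "\<bar>real (OCC \<pi> \<tau> L) / real (NN m k L) - real (OCC \<pi> \<sigma> f0) / real (NN n k f0)\<bar>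
     \<le> (1 - qlow k r c f0 n) + (shigh k c f0 n - 1)"
    by (rule est1[OF Npos Mpos _ ON NN2 R2' R1' R3' R4' qfinal sfinal]) simp
  then show ?thesis by (simp add: rho_eq)
qed

lemma limits_e:
  fixes k :: nat and r c :: "nat \<Rightarrow> nat" and f0 :: "nat \<Rightarrow> real" and n :: "nat \<Rightarrow> nat"
  assumes r: "(\<lambda>j. 1 / real (r j)) \<longlonglongrightarrow> 0" and c: "(\<lambda>j. 1 / real (c j)) \<longlonglongrightarrow> 0"
    and u: "(\<lambda>j. f0 j / real (n j)) \<longlonglongrightarrow> 0" and v: "(\<lambda>j. 1 / f0 j) \<longlonglongrightarrow> 0"
  shows "(\<lambda>j. (1 - qlow k (r j) (c j) (f0 j) (n j)) + (shigh k (c j) (f0 j) (n j) - 1)) \<longlonglongrightarrow> 0"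
proof -
  have kv: "(\<lambda>j. real k / f0 j) \<longlonglongrightarrow> 0"
    using tendsto_mult[OF tendsto_const[of "real k"] v] by simp
  have v2: "(\<lambda>j. 2 / f0 j) \<longlonglongrightarrow> 0"
    using tendsto_mult[OF tendsto_const[of "2::real"] v] by simp
  have q: "(\<lambda>j. qlow k (r j) (c j) (f0 j) (n j)) \<longlonglongrightarrow> (1 / (1 + 0)) * (1 - 0) * ((1 - 0) / (1 + 0)) ^ (k - 1)"
    unfolding qlow_def by (intro tendsto_intros r c u kv) simp_all
  have s: "(\<lambda>j. shigh k (c j) (f0 j) (n j)) \<longlonglongrightarrow> (1 / (1 - 0)) * ((1 + 0 + 0) / (1 - 0)) ^ (k - 1)"
    unfolding shigh_def by (intro tendsto_intros c u kv v2) simp_all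
  have "(\<lambda>j. (1 - qlow k (r j) (c j) (f0 j) (n j)) + (shigh k (c j) (f0 j) (n j) - 1)) \<longlonglongrightarrow> (1 - 1) + (1 - 1)"
    using q s by (intro tendsto_intros) simp_all
  then show ?thesis by simp
qed

lemma inv_nat_to_0:
  fixes r :: "nat \<Rightarrow> nat"
  assumes "\<And>j. r j \<ge> j + 1"
  shows "(\<lambda>j. 1 / real (r j)) \<longlonglongrightarrow> 0"
proof (rule tendsto_sandwich[where f = "\<lambda>_. 0" and h = "\<lambda>j. inverse (real (Suc j))"])
  show "\<forall>\<^sub>F j in sequentially. 0 \<le> 1 / real (r j)" by simp
  show "\<forall>\<^sub>F j in sequentially. 1 / real (r j) \<le> inverse (real (Suc j))"
  proof (rule always_eventually, rule allI)
    fix j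
    have "real (r j) \<ge> real (Suc j)" using assms[of j] by simp
    then show "1 / real (r j) \<le> inverse (real (Suc j))" by (simp add: inverse_eq_divide frac_le)
  qed
  show "(\<lambda>_. 0::real) \<longlonglongrightarrow> 0" by simp
  show "(\<lambda>j. inverse (real (Suc j))) \<longlonglongrightarrow> 0" by (rule LIMSEQ_inverse_real_of_nat)
qed

theorem mainTheorem4:
  fixes f fb :: "nat \<Rightarrow> real" and \<sigma>s :: "nat \<Rightarrow> nat list" and \<Xi> :: "nat list \<Rightarrow> real"
  assumes "scaling_function f" and "scaling_function fb" and "much_less f fb"
    and "\<forall>j. is_perm (\<sigma>s j)"
    and "\<forall>\<pi>. is_perm \<pi> \<longrightarrow> 0 \<le> \<Xi> \<pi> \<and> \<Xi> \<pi> \<le> 1"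
    and "converges_at_scale f \<sigma>s \<Xi>"
  shows "\<exists>\<tau>s :: nat \<Rightarrow> nat list. (\<forall>j. is_perm (\<tau>s j)) \<and> converges_at_scale fb \<tau>s \<Xi>"
proof -
  have fpos: "\<And>x. x \<ge> 1 \<Longrightarrow> 0 < f x" and ftop: "filterlim f at_top sequentially"
    and frat: "(\<lambda>x. f x / real x) \<longlonglongrightarrow> 0"
    using assms(1) unfolding scaling_function_def by auto
  have fbtop: "filterlim fb at_top sequentially" and fbrat: "(\<lambda>x. fb x / real x) \<longlonglongrightarrow> 0"
    using assms(2) unfolding scaling_function_def by auto
  have perm: "\<And>j. is_perm (\<sigma>s j)" using assms(4) by simp
  have nlim: "filterlim (\<lambda>j. length (\<sigma>s j)) at_top sequentially"
    and conv: "\<And>\<pi>. is_perm \<pi> \<Longrightarrow> ((\<lambda>j. rho (f (length (\<sigma>s j))) \<pi> (\<sigma>s j)) \<longlonglongrightarrow> \<Xi> \<pi>)"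
    using assms(6) unfolding converges_at_scale_def by auto
  define n where "n j = length (\<sigma>s j)" for j
  have n1: "n j \<ge> 1" for j using perm[of j] unfolding n_def is_perm_def by (simp add: Suc_leI)
  define f0 where "f0 j = f (n j)" for j
  have f0pos: "f0 j > 0" for j unfolding f0_def using fpos n1 by simp
  define P where "P j m \<longleftrightarrow> 1 \<le> m \<and> real (j + 1) * f0 j \<le> fb m \<and> fb m / real m \<le> f0 j / (real (n j) * real (j + 1))" for j m
  have exP: "\<exists>m. P j m" for j
  proof -
    have e1: "\<forall>\<^sub>F m in sequentially. real (j + 1) * f0 j \<le> fb m"
      using fbtop unfolding filterlim_at_top by blast
    have "real (n j) * real (j + 1) > 0" using n1[of j] by simp
    then have eps: "f0 j / (real (n j) * real (j + 1)) > 0" using f0pos[of j] by simp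
    have e2: "\<forall>\<^sub>F m in sequentially. fb m / real m < f0 j / (real (n j) * real (j + 1))"
      by (rule order_tendstoD(2)[OF fbrat eps])
    have e3: "\<forall>\<^sub>F m in sequentially. 1 \<le> m" by (rule eventually_ge_at_top)
    have "\<forall>\<^sub>F m in sequentially. P j m" using eventually_conj[OF e3 eventually_conj[OF e1 e2]]
      unfolding P_def by (rule eventually_mono) auto
    then obtain N where "\<forall>m\<ge>N. P j m" unfolding eventually_sequentially by blast
    then show ?thesis by blast
  qed
  define mm where "mm j = (SOME m. P j m)" for j
  have Pm: "P j (mm j)" for j unfolding mm_def using exP someI_ex by metis
  define L where "L j = fb (mm j)" for j
  define c where "c j = nat \<lfloor>L j / f0 j\<rfloor>" for j
  define r where "r j = mm j div (c j * n j)" for j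
  define \<tau>s where "\<tau>s j = tau (\<sigma>s j) (c j) (r j) (mm j)" for j
  have m1: "mm j \<ge> 1" for j using Pm[of j] unfolding P_def by simp
  have Lge: "real (j + 1) * f0 j \<le> L j" for j using Pm[of j] unfolding P_def L_def by simp
  have Lpos: "L j > 0" for j using Lge[of j] f0pos[of j] by (smt (verit) mult_pos_pos of_nat_0_less_iff zero_less_Suc Suc_eq_plus1)
  have ratio: "L j / f0 j \<ge> real (j + 1)" for j using Lge[of j] f0pos[of j] by (simp add: field_simps)
  have cge: "c j \<ge> j + 1" for j unfolding c_def using ratio[of j] by linarith
  have c1: "c j \<ge> 1" for j using cge[of j] by simp
  have cle: "real (c j) \<le> L j / f0 j" for j unfolding c_def using ratio[of j] by linarith
  have cf: "real (c j) * f0 j \<le> L j" for j using cle[of j] f0pos[of j] by (simp add: field_simps)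
  have Lc: "L j < (real (c j) + 1) * f0 j" for j
  proof -
    have "L j / f0 j < real (c j) + 1" unfolding c_def using ratio[of j] by linarith
    then show ?thesis using f0pos[of j] by (simp add: field_simps)
  qed
  have cnpos: "c j * n j > 0" for j using c1[of j] n1[of j] by simp
  have mbig: "(j + 1) * (c j * n j) \<le> mm j" for j
  proof -
    have h: "L j / real (mm j) \<le> f0 j / (real (n j) * real (j + 1))" using Pm[of j] unfolding P_def L_def by simp
    have mpos: "real (mm j) > 0" using m1[of j] by simp
    have D: "real (n j) * real (j + 1) > 0" using n1[of j] by simp
    have gen: "a * d \<le> b * x" if "a / x \<le> b / d" "x > 0" "d > 0" for a b x d :: real
    proof -
      have "a / x * (x * d) \<le> b / d * (x * d)" using that by (intro mult_right_mono) auto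
      then show ?thesis using that by (simp add: field_simps)
    qed
    have "L j * (real (n j) * real (j + 1)) \<le> f0 j * real (mm j)"
      by (rule gen[OF h mpos D])
    moreover have "real (c j) * f0 j * (real (n j) * real (j + 1)) \<le> L j * (real (n j) * real (j + 1))"
      using cf[of j] by (intro mult_right_mono) auto
    ultimately have "f0 j * (real (c j) * real (n j) * real (j + 1)) \<le> f0 j * real (mm j)"
      by (simp add: algebra_simps)
    then have "real (c j) * real (n j) * real (j + 1) \<le> real (mm j)" using f0pos[of j] by simp
    then have "real ((j + 1) * (c j * n j)) \<le> real (mm j)" by (simp add: algebra_simps)
    then show ?thesis by (simp only: of_nat_le_iff)
  qed
  have rge: "r j \<ge> j + 1" for j
  proof -
    have "(j + 1) * (c j * n j) div (c j * n j) \<le> mm j div (c j * n j)" by (rule div_le_mono[OF mbig])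
    then show ?thesis unfolding r_def using cnpos[of j] by simp
  qed
  have r1: "r j \<ge> 1" for j using rge[of j] by simp
  have rm: "r j * (c j * length (\<sigma>s j)) \<le> mm j" for j unfolding r_def n_def[symmetric] by simp
  have mr: "real (mm j) < (real (r j) + 1) * (real (c j) * real (length (\<sigma>s j)))" for j
  proof -
    have "mm j = r j * (c j * n j) + mm j mod (c j * n j)" unfolding r_def by (rule div_mult_mod_eq[symmetric])
    moreover have "mm j mod (c j * n j) < c j * n j" using cnpos[of j] by simp
    ultimately have "mm j < (r j + 1) * (c j * n j)" by (simp add: algebra_simps)
    then have "real (mm j) < real ((r j + 1) * (c j * n j))" by (simp only: of_nat_less_iff)
    then show ?thesis unfolding n_def by (simp add: algebra_simps)
  qed
  have tperm: "is_perm (\<tau>s j)" for j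
    unfolding \<tau>s_def by (rule tau_perm[OF perm c1 rm m1])
  have tlen: "length (\<tau>s j) = mm j" for j unfolding \<tau>s_def by simp
  have mge: "mm j \<ge> j + 1" for j
  proof -
    have "(j + 1) * 1 \<le> (j + 1) * (c j * n j)" using cnpos[of j] by (intro mult_le_mono2) simp
    then have "j + 1 \<le> (j + 1) * (c j * n j)" by simp
    then show ?thesis using mbig[of j] by linarith
  qed
  have conv_t: "converges_at_scale fb \<tau>s \<Xi>"
    unfolding converges_at_scale_def
  proof (intro conjI allI impI)
    show "filterlim (\<lambda>j. length (\<tau>s j)) at_top sequentially"
      unfolding filterlim_at_top tlen
    proof
      fix Z :: nat
      show "\<forall>\<^sub>F j in sequentially. Z \<le> mm j"
        unfolding eventually_sequentially using mge by (metis Suc_eq_plus1 le_SucI order_trans)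
    qed
  next
    fix \<pi> :: "nat list" assume pp: "is_perm \<pi>"
    let ?k = "length \<pi>"
    have k1: "?k \<ge> 1" using pp unfolding is_perm_def by (simp add: Suc_leI)
    define rs where "rs j = rho (f0 j) \<pi> (\<sigma>s j)" for j
    define rt where "rt j = rho (L j) \<pi> (\<tau>s j)" for j
    have rs_lim: "rs \<longlonglongrightarrow> \<Xi> \<pi>" using conv[OF pp] unfolding rs_def f0_def n_def .
    define e where "e j = (1 - qlow ?k (r j) (c j) (f0 j) (n j)) + (shigh ?k (c j) (f0 j) (n j) - 1)" for j
    have f0top: "filterlim f0 at_top sequentially"
      unfolding f0_def n_def by (rule filterlim_compose[OF ftop nlim])
    have u: "(\<lambda>j. f0 j / real (n j)) \<longlonglongrightarrow> 0"
      unfolding f0_def n_def by (rule filterlim_compose[OF frat nlim])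
    have v: "(\<lambda>j. 1 / f0 j) \<longlonglongrightarrow> 0"
      using tendsto_inverse_0_at_top[OF f0top] by (simp add: inverse_eq_divide)
    have e_lim: "e \<longlonglongrightarrow> 0" unfolding e_def
      by (rule limits_e[OF inv_nat_to_0[OF rge] inv_nat_to_0[OF cge] u v])
    have ev1: "\<forall>\<^sub>F j in sequentially. real ?k + 1 \<le> f0 j"
      using f0top unfolding filterlim_at_top by blast
    have ev2: "\<forall>\<^sub>F j in sequentially. f0 j / real (n j) < 1"
      by (rule order_tendstoD(2)[OF u]) simp
    have bound: "\<forall>\<^sub>F j in sequentially. \<bar>rt j - rs j\<bar> \<le> e j"
      using eventually_conj[OF ev1 ev2]
    proof (rule eventually_mono)
      fix j assume h: "real ?k + 1 \<le> f0 j \<and> f0 j / real (n j) < 1"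
      have np: "real (n j) > 0" using n1[of j] by simp
      have "f0 j < real (n j)" using h np by (simp add: divide_less_eq)
      then have fn: "f0 j < real (length (\<sigma>s j))" unfolding n_def .
      have fk: "real ?k + 1 \<le> f0 j" using h by simp
      show "\<bar>rt j - rs j\<bar> \<le> e j"
        unfolding rt_def rs_def e_def \<tau>s_def n_def
        by (rule est_main[OF perm k1 c1 r1 rm mr cf Lc fk fn])
    qed
    have d_lim: "(\<lambda>j. rt j - rs j) \<longlonglongrightarrow> 0"
    proof (rule tendsto_sandwich[where f = "\<lambda>j. - e j" and h = e])
      show "\<forall>\<^sub>F j in sequentially. - e j \<le> rt j - rs j" using bound by (rule eventually_mono) linarith
      show "\<forall>\<^sub>F j in sequentially. rt j - rs j \<le> e j" using bound by (rule eventually_mono) linarith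
      show "(\<lambda>j. - e j) \<longlonglongrightarrow> 0" using tendsto_minus[OF e_lim] by simp
      show "e \<longlonglongrightarrow> 0" by (rule e_lim)
    qed
    have "(\<lambda>j. rs j + (rt j - rs j)) \<longlonglongrightarrow> \<Xi> \<pi> + 0" by (rule tendsto_add[OF rs_lim d_lim])
    then have "rt \<longlonglongrightarrow> \<Xi> \<pi>" by simp
    then show "(\<lambda>j. rho (fb (length (\<tau>s j))) \<pi> (\<tau>s j)) \<longlonglongrightarrow> \<Xi> \<pi>"
      unfolding rt_def L_def tlen .
  qed
  show ?thesis using tperm conv_t by blast
qed

end
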